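(* Let $X$ be a metric space with an $(n-1)$-dimensional control function $D_X^{n-1}:\mathbb{R}_+\to\mathbb{R}_+\cup\{\infty\}$, where $n\ge1$. If $r>0$ and $f:\{0,1,\ldots,k\}^n\to X$ is an $r$-cube, then $k\le D_X^{n-1}(n\cdot r)\cdot \mathrm{Lip}(f^{-1})$.
   Context: $\{0,\ldots,k\}^n$ carries the $\ell_1$-metric, and $\mathrm{Lip}(f^{-1})$ denotes the Lipschitz constant of the inverse of $f$ onto its image, i.e. the least $L\in[0,\infty]$ with $\|a-b\|_1\le L\cdot\mathrm{dist}(f(a),f(b))$ for all $a,b$. An $r$-cube in $X$ is a function $f:\{0,\ldots,k\}^n\to X$ with $\mathrm{dist}(f(x),f(x+e_i))<r$ whenever $x,x+e_i\in\{0,\ldots,k\}^n$. For $Y\subseteq X$, $r$-components of $Y$ are classes of points joined by sequences in $Y$ with consecutive distances $<r$. An $m$-dimensional control function of $X$ is $D:\mathbb{R}_+\to\mathbb{R}_+\cup\{\infty\}$ such that for each $r>0$ there is a cover $\{X_0,\dots,X_m\}$ of $X$ such that every open ball $B(x,r)$ lies in some $X_i$ and every $r$-component of each $X_i$ has diameter at most $D(r)$. *)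

theory Defs
  imports "HOL-Analysis.Analysis"
begin

text \<open>The discrete cube {0,...,k}^n, points represented as functions nat => nat
  that vanish outside the coordinates 0..n-1.\<close>
definition grid :: "nat \<Rightarrow> nat \<Rightarrow> (nat \<Rightarrow> nat) set" where
  "grid n k = {a. (\<forall>i<n. a i \<le> k) \<and> (\<forall>i\<ge>n. a i = 0)}"

definition l1dist :: "nat \<Rightarrow> (nat \<Rightarrow> nat) \<Rightarrow> (nat \<Rightarrow> nat) \<Rightarrow> real" where
  "l1dist n a b = (\<Sum>i<n. \<bar>real (a i) - real (b i)\<bar>)"

definition shift :: "(nat \<Rightarrow> nat) \<Rightarrow> nat \<Rightarrow> (nat \<Rightarrow> nat)" where
  "shift a i = a(i := Suc (a i))"

definition r_cube :: "'a::metric_space set \<Rightarrow> real \<Rightarrow> nat \<Rightarrow> nat \<Rightarrow> ((nat \<Rightarrow> nat) \<Rightarrow> 'a) \<Rightarrow> bool" where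
  "r_cube X r n k f \<longleftrightarrow> (\<forall>a\<in>grid n k. f a \<in> X) \<and>
     (\<forall>a\<in>grid n k. \<forall>i<n. shift a i \<in> grid n k \<longrightarrow> dist (f a) (f (shift a i)) < r)"

text \<open>Lipschitz constant of the inverse of f onto its image (value in [0,\<infinity>]).\<close>
definition lip_inv :: "nat \<Rightarrow> nat \<Rightarrow> ((nat \<Rightarrow> nat) \<Rightarrow> 'a::metric_space) \<Rightarrow> ennreal" where
  "lip_inv n k f = Inf {L. \<forall>a\<in>grid n k. \<forall>b\<in>grid n k.
       ennreal (l1dist n a b) \<le> L * ennreal (dist (f a) (f b))}"

definition r_component :: "'a::metric_space set \<Rightarrow> real \<Rightarrow> 'a \<Rightarrow> 'a set" where
  "r_component Y r x = {y. (\<lambda>p q. p \<in> Y \<and> q \<in> Y \<and> dist p q < r)\<^sup>*\<^sup>* x y}"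

definition ediam :: "'a::metric_space set \<Rightarrow> ennreal" where
  "ediam S = (SUP p\<in>S \<times> S. ennreal (dist (fst p) (snd p)))"

definition control_function :: "'a::metric_space set \<Rightarrow> nat \<Rightarrow> (real \<Rightarrow> ennreal) \<Rightarrow> bool" where
  "control_function X m D \<longleftrightarrow> (\<forall>r>0. \<exists>U :: nat \<Rightarrow> 'a set.
      (\<forall>i\<le>m. U i \<subseteq> X) \<and> (\<Union>i\<le>m. U i) = X \<and>
      (\<forall>x\<in>X. \<exists>i\<le>m. ball x r \<inter> X \<subseteq> U i) \<and>
      (\<forall>i\<le>m. \<forall>x\<in>U i. ediam (r_component (U i) r x) \<le> D r))"

end

theory Submission
  imports Defs
begin

definition tdist :: "nat \<Rightarrow> nat \<Rightarrow> nat" where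
  "tdist x y = max x y - min x y"

lemma sum_shift_dec:
  fixes a b :: "nat \<Rightarrow> nat"
  assumes "j < n" "a j < b j"
  shows "(\<Sum>l<n. tdist (shift a j l) (b l)) + 1 = (\<Sum>l<n. tdist (a l) (b l))"
proof -
  have fin: "finite {..<n}" by simp
  have "(\<Sum>l<n. tdist (shift a j l) (b l)) = tdist (shift a j j) (b j) + (\<Sum>l\<in>{..<n}-{j}. tdist (shift a j l) (b l))"
    using assms by (subst sum.remove[OF fin, of j]) auto
  also have "(\<Sum>l\<in>{..<n}-{j}. tdist (shift a j l) (b l)) = (\<Sum>l\<in>{..<n}-{j}. tdist (a l) (b l))"
    by (rule sum.cong) (auto simp: shift_def)
  finally have 1: "(\<Sum>l<n. tdist (shift a j l) (b l)) = tdist (shift a j j) (b j) + (\<Sum>l\<in>{..<n}-{j}. tdist (a l) (b l))" .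
  have 2: "(\<Sum>l<n. tdist (a l) (b l)) = tdist (a j) (b j) + (\<Sum>l\<in>{..<n}-{j}. tdist (a l) (b l))"
    using assms by (subst sum.remove[OF fin, of j]) auto
  have "tdist (shift a j j) (b j) + 1 = tdist (a j) (b j)"
    using assms by (auto simp: shift_def tdist_def)
  then show ?thesis using 1 2 by simp
qed

lemma sum_shift_dec2:
  fixes a b :: "nat \<Rightarrow> nat"
  assumes "j < n" "b j < a j"
  shows "(\<Sum>l<n. tdist (a l) (shift b j l)) + 1 = (\<Sum>l<n. tdist (a l) (b l))"
proof -
  have "tdist x y = tdist y x" for x y by (auto simp: tdist_def)
  then show ?thesis using sum_shift_dec[of j n b a] assms by simp
qed

lemma cube_path:
  assumes cube: "r_cube X r n k f"
  shows "a \<in> grid n k \<Longrightarrow> b \<in> grid n k \<Longrightarrow> (\<Sum>l<n. tdist (a l) (b l)) = m \<Longrightarrow> a \<noteq> b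
     \<Longrightarrow> dist (f a) (f b) < r * real m"
proof (induction m arbitrary: a b)
  case 0
  then have "a l = b l" if "l < n" for l using that by (simp add: tdist_def) (meson antisym lessThan_iff)
  moreover have "a l = b l" if "l \<ge> n" for l using that 0 by (auto simp: grid_def)
  ultimately have "a = b" by (metis linorder_not_le ext)
  then show ?case using 0 by simp
next
  case (Suc m)
  obtain j where j: "a j \<noteq> b j"  using Suc.prems by blast
  have jn: "j < n" using j Suc.prems by (auto simp: grid_def)
  show ?case
  proof (cases "a j < b j")
    case True
    have ag: "shift a j \<in> grid n k" using Suc.prems True jn
      by (auto simp: grid_def shift_def)
    have d1: "dist (f a) (f (shift a j)) < r" using cube Suc.prems(1) ag jn
      by (auto simp: r_cube_def)
    have sm: "(\<Sum>l<n. tdist (shift a j l) (b l)) = m"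
      using sum_shift_dec[of j n a b] jn True Suc.prems by simp
    show ?thesis
    proof (cases "shift a j = b")
      case True
      then show ?thesis using d1 zero_le_dist[of "f a" "f b"] by (simp add: algebra_simps)
        (smt (verit) d1 mult_nonneg_nonneg of_nat_0_le_iff zero_le_dist)
    next
      case False
      have "dist (f (shift a j)) (f b) < r * real m" using Suc.IH[OF ag Suc.prems(2) sm False] .
      then show ?thesis using d1 dist_triangle[of "f a" "f b" "f (shift a j)"]
        by (simp add: algebra_simps)
    qed
  next
    case False
    then have lt: "b j < a j" using j by simp
    have bg: "shift b j \<in> grid n k" using Suc.prems lt jn
      by (auto simp: grid_def shift_def)
    have d1: "dist (f b) (f (shift b j)) < r" using cube Suc.prems(2) bg jn
      by (auto simp: r_cube_def)
    have sm: "(\<Sum>l<n. tdist (a l) (shift b j l)) = m"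
      using sum_shift_dec2[of j n b a] jn lt Suc.prems by simp
    show ?thesis
    proof (cases "a = shift b j")
      case True
      have rp: "r > 0" using d1 zero_le_dist[of "f b" "f (shift b j)"] by linarith
      have "r \<le> r * real (Suc m)" using rp by simp
      then show ?thesis using d1 True by (simp add: dist_commute)
    next
      case False
      have "dist (f a) (f (shift b j)) < r * real m" using Suc.IH[OF Suc.prems(1) bg sm False] .
      then show ?thesis using d1 dist_triangle[of "f a" "f b" "f (shift b j)"]
        by (simp add: algebra_simps dist_commute)
    qed
  qed
qed


definition HR :: "nat \<Rightarrow> nat \<Rightarrow> ((nat \<Rightarrow> nat) \<Rightarrow> nat) \<Rightarrow> nat \<Rightarrow> (nat \<Rightarrow> nat) \<Rightarrow> (nat \<Rightarrow> nat) \<Rightarrow> bool" where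
  "HR n k c i x y \<longleftrightarrow> x \<in> grid n k \<and> y \<in> grid n k \<and> c x = i \<and> c y = i \<and> (\<forall>j<n. x j \<le> y j + 1 \<and> y j \<le> x j + 1)"

lemma hex:
  fixes c :: "(nat \<Rightarrow> nat) \<Rightarrow> nat" and n k :: nat
  assumes k: "k \<ge> 1" and col: "\<forall>a\<in>grid n k. c a < n"
  shows "\<exists>i<n. \<exists>a b. a \<in> grid n k \<and> c a = i \<and> a i = 0 \<and> b i = k \<and> (HR n k c i)\<^sup>*\<^sup>* a b"
proof (rule ccontr)
  assume H: "\<not> ?thesis"
  define P where "P i = {b. \<exists>a. a \<in> grid n k \<and> c a = i \<and> a i = 0 \<and> (HR n k c i)\<^sup>*\<^sup>* a b}" for i
  have P1: "b \<in> grid n k \<and> c b = i" if "b \<in> P i" for b i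
  proof -
    obtain a where a: "a \<in> grid n k" "c a = i" "(HR n k c i)\<^sup>*\<^sup>* a b" using \<open>b \<in> P i\<close> unfolding P_def by blast
    from a(3) show ?thesis by (induction rule: rtranclp_induct) (use a in \<open>auto simp: HR_def\<close>)
  qed
  have P2: "y \<in> P i" if "b \<in> P i" "y \<in> grid n k" "c y = i" "\<forall>j<n. b j \<le> y j + 1 \<and> y j \<le> b j + 1" for b y i
  proof -
    have "HR n k c i b y" using that P1[OF that(1)] by (auto simp: HR_def)
    with that(1) show ?thesis unfolding P_def by (auto intro: rtranclp.rtrancl_into_rtrancl)
  qed
  have P3: "a \<in> P i" if "a \<in> grid n k" "c a = i" "a i = 0" for a i
    using that unfolding P_def by auto
  have P4: "b i \<noteq> k" if "i < n" "b \<in> P i" for b i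
    using H that unfolding P_def by blast
  define label where "label y i = (if y i = 0 then 0 else if y i = 3*k then 1 else
     if (\<exists>p\<in>P i. \<forall>j<n. y j \<le> 3*p j + 2 \<and> 3*p j \<le> y j + 2) then 0 else (1::nat))" for y i
  obtain q where q: "\<forall>i<n. q i < 3*k"
    and qq: "\<forall>i<n. \<exists>r s. (\<forall>j<n. q j \<le> r j \<and> r j \<le> q j + 1) \<and> (\<forall>j<n. q j \<le> s j \<and> s j \<le> q j + 1) \<and> label r i \<noteq> label s i"
    by (rule kuhn_lemma[of "3*k" n label]) (use k in \<open>auto simp: label_def\<close>)
  define a where "a j = (if j<n then (q j + 1) div 3 else 0)" for j
  have ag: "a \<in> grid n k" using q unfolding grid_def a_def by auto
  have aq: "q j \<le> 3 * a j + 1 \<and> 3 * a j \<le> q j + 1" if "j < n" for j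
    using that unfolding a_def by auto
  define i where "i = c a"
  have i: "i < n" using col ag i_def by auto
  have const: "label w i = (if a \<in> P i then 0 else 1)"
    if wq: "\<forall>j<n. q j \<le> w j \<and> w j \<le> q j + 1" for w
  proof -
    have wa: "w j \<le> 3 * a j + 2 \<and> 3 * a j \<le> w j + 2" if "j < n" for j
      using aq[OF that] wq that by auto
    have aik: "a i \<le> k" using ag i by (auto simp: grid_def)
    show ?thesis
    proof (cases "a \<in> P i")
      case True
      have "w i \<noteq> 3*k"
      proof
        assume "w i = 3*k"
        then have "a i = k" using wa[OF i] aik by presburger
        then show False using P4[OF i True] by simp
      qed
      moreover have "\<forall>j<n. w j \<le> 3*a j + 2 \<and> 3*a j \<le> w j + 2" using wa by blast
      ultimately show ?thesis using True unfolding label_def by auto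
    next
      case False
      have "w i \<noteq> 0"
      proof
        assume "w i = 0"
        then have "a i = 0" using wa[OF i] by presburger
        then show False using P3[OF ag i_def[symmetric]] False by simp
      qed
      moreover have "\<not> (\<exists>p\<in>P i. \<forall>j<n. w j \<le> 3*p j + 2 \<and> 3*p j \<le> w j + 2)"
      proof
        assume "\<exists>p\<in>P i. \<forall>j<n. w j \<le> 3*p j + 2 \<and> 3*p j \<le> w j + 2"
        then obtain p where p: "p \<in> P i" "\<forall>j<n. w j \<le> 3*p j + 2 \<and> 3*p j \<le> w j + 2" by blast
        have "\<forall>j<n. p j \<le> a j + 1 \<and> a j \<le> p j + 1"
        proof (intro allI impI)
          fix j assume "j < n"
          then show "p j \<le> a j + 1 \<and> a j \<le> p j + 1" proof -
            have "w j \<le> 3 * a j + 2 \<and> 3 * a j \<le> w j + 2" using wa \<open>j < n\<close> by blast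
            moreover have "w j \<le> 3*p j + 2 \<and> 3*p j \<le> w j + 2" using p(2) \<open>j < n\<close> by blast
            ultimately show ?thesis by presburger
          qed
        qed
        then have "a \<in> P i" using P2[OF p(1) ag i_def[symmetric]] by blast
        then show False using False by simp
      qed
      ultimately show ?thesis using False unfolding label_def by auto
    qed
  qed
  from qq i obtain r s where "\<forall>j<n. q j \<le> r j \<and> r j \<le> q j + 1" "\<forall>j<n. q j \<le> s j \<and> s j \<le> q j + 1"
    "label r i \<noteq> label s i" by blast
  then show False using const by metis
qed


lemma lip_final:
  fixes f :: "(nat \<Rightarrow> nat) \<Rightarrow> 'a::metric_space"
  assumes kl: "real k \<le> l1dist n a b" and ag: "a \<in> grid n k" and bg: "b \<in> grid n k"
    and dD: "ennreal (dist (f a) (f b)) \<le> Dv" and k: "k > 0"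
  shows "lip_inv n k f = \<infinity> \<or> of_nat k \<le> Dv * lip_inv n k f"
proof (cases "dist (f a) (f b) = 0")
  case True
  have "{L. \<forall>a\<in>grid n k. \<forall>b\<in>grid n k. ennreal (l1dist n a b) \<le> L * ennreal (dist (f a) (f b))} = {}"
  proof (rule ccontr)
    assume "\<not> ?thesis"
    then obtain L where "\<forall>a\<in>grid n k. \<forall>b\<in>grid n k. ennreal (l1dist n a b) \<le> L * ennreal (dist (f a) (f b))" by blast
    then have "ennreal (l1dist n a b) \<le> 0" using ag bg True by force
    moreover have "l1dist n a b > 0" using kl k by linarith
    ultimately show False by simp
  qed
  then have "lip_inv n k f = Inf {}" unfolding lip_inv_def by (simp only:)
  then show ?thesis by simp
next
  case False
  define d where "d = dist (f a) (f b)"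
  define l where "l = l1dist n a b"
  have dp: "d > 0" using False d_def by simp
  have lp: "l \<ge> 0" using kl l_def by linarith
  have "ennreal (l / d) \<le> lip_inv n k f" unfolding lip_inv_def
  proof (rule Inf_greatest)
    fix L assume "L \<in> {L. \<forall>a\<in>grid n k. \<forall>b\<in>grid n k. ennreal (l1dist n a b) \<le> L * ennreal (dist (f a) (f b))}"
    then have h: "ennreal l \<le> L * ennreal d" using ag bg l_def d_def by blast
    show "ennreal (l / d) \<le> L"
    proof (cases L)
      case (real t)
      then have "ennreal l \<le> ennreal (t * d)" using h dp by (simp add: ennreal_mult)
      then have "l \<le> t * d" using real dp by (simp add: ennreal_le_iff)
      then have "l / d \<le> t" using dp by (simp add: divide_le_eq)
      then show ?thesis using real by (simp add: ennreal_leI)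
    next
      case top
      then show ?thesis by simp
    qed
  qed
  have "of_nat k = ennreal (real k)" by (rule ennreal_of_nat_eq_real_of_nat)
  also have "\<dots> \<le> ennreal l" using kl l_def by (simp add: ennreal_leI)
  also have "\<dots> = ennreal (l / d) * ennreal d" using dp lp by (simp add: ennreal_mult[symmetric])
  also have "\<dots> \<le> lip_inv n k f * Dv"
    by (rule mult_mono) (use \<open>ennreal (l / d) \<le> lip_inv n k f\<close> dD d_def in auto)
  finally show ?thesis by (simp add: mult.commute)
qed

lemma adj_dist:
  assumes cube: "r_cube X r n k f" and n: "n \<ge> 1" and r: "r > 0"
    and xg: "x \<in> grid n k" and yg: "y \<in> grid n k" and adj: "\<forall>j<n. x j \<le> y j + 1 \<and> y j \<le> x j + 1"
  shows "dist (f x) (f y) < real n * r"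
proof (cases "x = y")
  case True
  then show ?thesis using n r by simp
next
  case False
  have "(\<Sum>l<n. tdist (x l) (y l)) \<le> (\<Sum>l<n. 1)"
    by (rule sum_mono) (use adj in \<open>auto simp: tdist_def\<close>)
  then have m: "(\<Sum>l<n. tdist (x l) (y l)) \<le> n" by simp
  have "dist (f x) (f y) < r * real (\<Sum>l<n. tdist (x l) (y l))"
    using cube_path[OF cube xg yg refl False] .
  also have "\<dots> \<le> r * real n"
  proof -
    have "real (\<Sum>l<n. tdist (x l) (y l)) \<le> real n" using m by (simp only: of_nat_le_iff)
    then show ?thesis by (rule mult_left_mono) (use r in simp)
  qed
  finally show ?thesis by (simp add: mult.commute)
qed

theorem corollary2p4:
  fixes X :: "'a::metric_space set" and D :: "real \<Rightarrow> ennreal"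
    and f :: "(nat \<Rightarrow> nat) \<Rightarrow> 'a" and n k :: nat and r :: real
  assumes "n \<ge> 1"
    and "control_function X (n - 1) D"
    and "r > 0"
    and "r_cube X r n k f"
  shows "lip_inv n k f = \<infinity> \<or> of_nat k \<le> D (real n * r) * lip_inv n k f"
proof -
  have nr: "real n * r > 0" using assms(1,3) by simp
  have cf: "\<forall>r>0. \<exists>U :: nat \<Rightarrow> 'a set.
      (\<forall>i\<le>n-1. U i \<subseteq> X) \<and> (\<Union>i\<le>n-1. U i) = X \<and>
      (\<forall>x\<in>X. \<exists>i\<le>n-1. ball x r \<inter> X \<subseteq> U i) \<and>
      (\<forall>i\<le>n-1. \<forall>x\<in>U i. ediam (r_component (U i) r x) \<le> D r)"
    using assms(2) unfolding control_function_def .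
  obtain U :: "nat \<Rightarrow> 'a set" where UU: "(\<forall>i\<le>n-1. U i \<subseteq> X) \<and> (\<Union>i\<le>n-1. U i) = X \<and>
      (\<forall>x\<in>X. \<exists>i\<le>n-1. ball x (real n * r) \<inter> X \<subseteq> U i) \<and>
      (\<forall>i\<le>n-1. \<forall>x\<in>U i. ediam (r_component (U i) (real n * r) x) \<le> D (real n * r))"
    using cf[rule_format, OF nr] by (rule exE)
  have U2: "(\<Union>i\<le>n-1. U i) = X" using UU by (rule conjunct1[OF conjunct2])
  have U4: "\<forall>i\<le>n-1. \<forall>x\<in>U i. ediam (r_component (U i) (real n * r) x) \<le> D (real n * r)"
    using UU by (rule conjunct2[OF conjunct2[OF conjunct2]])
  show ?thesis
  proof (cases "k = 0")
    case True
    then show ?thesis by simp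
  next
    case False
    define c where "c a = (SOME i. i \<le> n-1 \<and> f a \<in> U i)" for a
    have cprop: "c a \<le> n-1 \<and> f a \<in> U (c a)" if "a \<in> grid n k" for a
    proof -
      have "f a \<in> X" using assms(4) that by (auto simp: r_cube_def)
      then have "\<exists>i. i \<le> n-1 \<and> f a \<in> U i" using U2 by blast
      then show ?thesis unfolding c_def by (rule someI_ex)
    qed
    have col: "\<forall>a\<in>grid n k. c a < n"
    proof
      fix a assume "a \<in> grid n k"
      then have "c a \<le> n-1" using cprop by blast
      then show "c a < n" using assms(1) by linarith
    qed
    obtain i a b where i: "i < n" and ag: "a \<in> grid n k" and ca: "c a = i" and ai: "a i = 0"
      and bi: "b i = k" and hr: "(HR n k c i)\<^sup>*\<^sup>* a b"
      using hex[of k n c] False col by (metis One_nat_def Suc_leI neq0_conv)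
    have bg: "b \<in> grid n k"
      using hr by (induction rule: rtranclp_induct) (use ag in \<open>auto simp: HR_def\<close>)
    have chain: "(\<lambda>p q. p \<in> U i \<and> q \<in> U i \<and> dist p q < real n * r)\<^sup>*\<^sup>* (f a) (f b)"
      using hr
    proof (induction rule: rtranclp_induct)
      case base
      then show ?case by simp
    next
      case (step y z)
      have hy: "y \<in> grid n k" "z \<in> grid n k" "c y = i" "c z = i"
          "\<forall>j<n. y j \<le> z j + 1 \<and> z j \<le> y j + 1"
        using step(2) unfolding HR_def by blast+
      have "f y \<in> U i" using cprop[OF hy(1)] hy(3) by simp
      moreover have "f z \<in> U i" using cprop[OF hy(2)] hy(4) by simp
      moreover have "dist (f y) (f z) < real n * r"
        using adj_dist[OF assms(4) assms(1) assms(3) hy(1) hy(2) hy(5)] .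
      ultimately have "f y \<in> U i \<and> f z \<in> U i \<and> dist (f y) (f z) < real n * r" by blast
      then show ?case using step(3) by (auto intro: rtranclp.rtrancl_into_rtrancl)
    qed
    let ?S = "r_component (U i) (real n * r) (f a)"
    have fa: "f a \<in> ?S" unfolding r_component_def by simp
    have fb: "f b \<in> ?S" unfolding r_component_def using chain by simp
    have "ennreal (dist (f a) (f b)) \<le> ediam ?S"
      unfolding ediam_def
      by (rule SUP_upper2[where i="(f a, f b)"]) (use fa fb in simp_all)
    also have "\<dots> \<le> D (real n * r)"
    proof -
      have "i \<le> n-1" using i by linarith
      moreover have "f a \<in> U i" using cprop[OF ag] ca by simp
      ultimately show ?thesis using U4 by blast
    qed
    finally have dD: "ennreal (dist (f a) (f b)) \<le> D (real n * r)" .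
    have "real k = \<bar>real (a i) - real (b i)\<bar>" using ai bi by simp
    also have "\<dots> \<le> l1dist n a b" unfolding l1dist_def
      by (rule member_le_sum) (use i in auto)
    finally have kl: "real k \<le> l1dist n a b" .
    show ?thesis using lip_final[OF kl ag bg dD] False by simp
  qed
qed

end
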